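(* In the asynchronous online testing setting described in the context, assume that the null $p$-values are independent of each other and of the non-null $p$-values, and that the test levels and candidacy thresholds are monotone. Let $M\in\mathbb{N}$ and let $g:(\mathbb{N}\cup\{0\})^M\to(0,\infty)$ be coordinate-wise non-decreasing. Then for any index $t\le M$ with $t\in\mathcal{H}^0$, $$\mathbb{E}\Big[\frac{\alpha_t\mathbf{1}\{P_t>\lambda_t\}}{(1-\lambda_t)\,g(|\mathcal{R}|_{1:M})}\,\Big|\,\mathcal{F}\Big]\ \ge\ \mathbb{E}\Big[\frac{\alpha_t}{g(|\mathcal{R}|_{1:M})}\,\Big|\,\mathcal{F}\Big]\ \ge\ \mathbb{E}\Big[\frac{\mathbf{1}\{P_t\le\alpha_t\}}{g(|\mathcal{R}|_{1:M})}\,\Big|\,\mathcal{F}\Big],$$ where $|\mathcal{R}|_{1:M}=(|\mathcal{R}_1|,\dots,|\mathcal{R}_M|)$ and $\mathcal{F}=\mathcal{F}_{\mathrm{async}}^{-\mathcal{X}^{E_t}}$.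
   Context: Hypotheses $H_1,H_2,\dots$ are tested; test $t$ starts at step $t$ with test level $\alpha_t\ge0$ and candidacy threshold $\lambda_t$ with $\alpha_t\le\lambda_t<1$, and produces a $p$-value $P_t$; each null $p$-value is super-uniform, $\mathbb{P}(P_t\le u)\le u$ for $u\in[0,1]$. $\mathcal{H}^0$ is the fixed set of true null indices. Test $t$ has a fixed decision time $E_t\ge t$. For each step $s$, $\mathcal{R}_s=\{i\in[s]:E_i=s,\ P_i\le\alpha_i\}$ and $\mathcal{C}_s=\{i\in[s]:E_i=s,\ P_i\le\lambda_i\}$. The levels are $\alpha_i=g_i(\mathcal{R}_1,\mathcal{C}_1,\dots,\mathcal{R}_{i-1},\mathcal{C}_{i-1})$ and $\lambda_i=h_i(\mathcal{R}_1,\mathcal{C}_1,\dots,\mathcal{R}_{i-1},\mathcal{C}_{i-1})$ for deterministic functions $g_i,h_i$ (in the LORD-type case they depend only on the $\mathcal{R}$'s). Monotone means each $g_i,h_i$ does not decrease when any argument $\mathcal{R}_k$ or $\mathcal{C}_k$ is replaced by a superset, the others fixed. $\mathcal{F}_{\mathrm{async}}^{-\mathcal{X}^{s}}$ denotes $\sigma(\mathcal{R}_1,\mathcal{C}_1,\dots,\mathcal{R}_{s-1},\mathcal{C}_{s-1})$ (or $\sigma(\mathcal{R}_1,\dots,\mathcal{R}_{s-1})$ in the LORD-type case). *)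

theory Defs
  imports "HOL-Probability.Probability"
begin

text \<open>A history is the list [(R_1,C_1), ..., (R_s,C_s)] of rejection and candidate sets.
  Level rules ga, ha :: nat => history => real give alpha_i = ga i [(R_1,C_1),...,(R_{i-1},C_{i-1})]
  and lambda_i = ha i [...]. Tests are indexed from 1; p is the vector of p-values,
  E the fixed decision times.\<close>

type_synonym history = "(nat set \<times> nat set) list"

fun hist :: "(nat \<Rightarrow> history \<Rightarrow> real) \<Rightarrow> (nat \<Rightarrow> history \<Rightarrow> real) \<Rightarrow> (nat \<Rightarrow> nat)
    \<Rightarrow> (nat \<Rightarrow> real) \<Rightarrow> nat \<Rightarrow> history" where
  "hist ga ha E p 0 = []"
| "hist ga ha E p (Suc s) =
     (let H = hist ga ha E p s in
      H @ [({i \<in> {1..Suc s}. E i = Suc s \<and> p i \<le> ga i (take (i - 1) H)},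
            {i \<in> {1..Suc s}. E i = Suc s \<and> p i \<le> ha i (take (i - 1) H)})])"

definition test_level :: "(nat \<Rightarrow> history \<Rightarrow> real) \<Rightarrow> (nat \<Rightarrow> history \<Rightarrow> real) \<Rightarrow> (nat \<Rightarrow> nat)
    \<Rightarrow> (nat \<Rightarrow> real) \<Rightarrow> nat \<Rightarrow> real" where
  "test_level ga ha E p i = ga i (hist ga ha E p (i - 1))"

definition cand_threshold :: "(nat \<Rightarrow> history \<Rightarrow> real) \<Rightarrow> (nat \<Rightarrow> history \<Rightarrow> real) \<Rightarrow> (nat \<Rightarrow> nat)
    \<Rightarrow> (nat \<Rightarrow> real) \<Rightarrow> nat \<Rightarrow> real" where
  "cand_threshold ga ha E p i = ha i (hist ga ha E p (i - 1))"

definition rej_set :: "(nat \<Rightarrow> history \<Rightarrow> real) \<Rightarrow> (nat \<Rightarrow> history \<Rightarrow> real) \<Rightarrow> (nat \<Rightarrow> nat)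
    \<Rightarrow> (nat \<Rightarrow> real) \<Rightarrow> nat \<Rightarrow> nat set" where
  "rej_set ga ha E p s = fst (hist ga ha E p s ! (s - 1))"

definition monotone_rule :: "(nat \<Rightarrow> history \<Rightarrow> real) \<Rightarrow> bool" where
  "monotone_rule f \<longleftrightarrow> (\<forall>i H H'. list_all2 (\<lambda>(R, C) (R', C'). R \<subseteq> R' \<and> C \<subseteq> C') H H'
       \<longrightarrow> f i H \<le> f i H')"

definition rv_events :: "'a measure \<Rightarrow> ('a \<Rightarrow> real) \<Rightarrow> 'a set set" where
  "rv_events M X = {X -` A \<inter> space M | A. A \<in> sets borel}"

end

theory Submission
  imports Defs
begin


lemma hist_length: "length (hist ga ha E p n) = n"
  by (induction n) (simp_all add: Let_def)

lemma hist_take: "s \<le> n \<Longrightarrow> take s (hist ga ha E p n) = hist ga ha E p s"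
proof (induction n)
  case 0 then show ?case by simp
next
  case (Suc n)
  show ?case
  proof (cases "s = Suc n")
    case True then show ?thesis using hist_length[of ga ha E p "Suc n"] by simp
  next
    case False
    then have "s \<le> n" using Suc.prems by simp
    then show ?thesis using Suc.IH hist_length[of ga ha E p n] by (simp add: Let_def)
  qed
qed

lemma hist_set: "set (hist ga ha E p n) \<subseteq> Pow {1..n} \<times> Pow {1..n}"
proof (induction n)
  case 0 then show ?case by simp
next
  case (Suc n)
  have "Pow {1..n} \<times> Pow {1..n} \<subseteq> Pow {1..Suc n} \<times> Pow {1..Suc n}" by auto
  then have "set (hist ga ha E p n) \<subseteq> Pow {1..Suc n} \<times> Pow {1..Suc n}" using Suc by (rule order_trans[rotated])
  then show ?case unfolding hist.simps Let_def set_append by auto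
qed

lemma hist_early:
  assumes "\<And>i. i \<noteq> t \<Longrightarrow> p i = p' i" "s < E t"
  shows "hist ga ha E p s = hist ga ha E p' s"
  using assms(2)
proof (induction s)
  case 0 then show ?case by simp
next
  case (Suc s)
  then have IH: "hist ga ha E p s = hist ga ha E p' s" by simp
  have "\<And>i. E i = Suc s \<Longrightarrow> p i = p' i" using Suc.prems assms(1) by (metis less_irrefl)
  then have "{i \<in> {1..Suc s}. E i = Suc s \<and> p i \<le> ga i (take (i - 1) (hist ga ha E p' s))}
     = {i \<in> {1..Suc s}. E i = Suc s \<and> p' i \<le> ga i (take (i - 1) (hist ga ha E p' s))}"
     "{i \<in> {1..Suc s}. E i = Suc s \<and> p i \<le> ha i (take (i - 1) (hist ga ha E p' s))}
     = {i \<in> {1..Suc s}. E i = Suc s \<and> p' i \<le> ha i (take (i - 1) (hist ga ha E p' s))}" by auto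
  then show ?case by (simp add: Let_def IH)
qed

lemma hist_same:
  assumes eq: "\<And>i. i \<noteq> t \<Longrightarrow> p i = p' i" and t: "1 \<le> t" "t \<le> E t"
    and cg: "(p t \<le> ga t (hist ga ha E p (t-1))) = (p' t \<le> ga t (hist ga ha E p (t-1)))"
    and ch: "(p t \<le> ha t (hist ga ha E p (t-1))) = (p' t \<le> ha t (hist ga ha E p (t-1)))"
  shows "hist ga ha E p s = hist ga ha E p' s"
proof (induction s)
  case 0 then show ?case by simp
next
  case (Suc s)
  have kg: "(p i \<le> ga i (take (i-1) (hist ga ha E p s))) = (p' i \<le> ga i (take (i-1) (hist ga ha E p s)))"
    and kh: "(p i \<le> ha i (take (i-1) (hist ga ha E p s))) = (p' i \<le> ha i (take (i-1) (hist ga ha E p s)))"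
    if "i \<in> {1..Suc s}" "E i = Suc s" for i
  proof -
    have "(p i \<le> ga i (take (i-1) (hist ga ha E p s))) = (p' i \<le> ga i (take (i-1) (hist ga ha E p s)))
        \<and> (p i \<le> ha i (take (i-1) (hist ga ha E p s))) = (p' i \<le> ha i (take (i-1) (hist ga ha E p s)))"
    proof (cases "i = t")
      case True
      then have "i - 1 \<le> s" using that by auto
      then have "take (i-1) (hist ga ha E p s) = hist ga ha E p (t-1)" using True hist_take by blast
      then show ?thesis using cg ch True by simp
    next
      case False then show ?thesis using eq by simp
    qed
    then show "(p i \<le> ga i (take (i-1) (hist ga ha E p s))) = (p' i \<le> ga i (take (i-1) (hist ga ha E p s)))"
      "(p i \<le> ha i (take (i-1) (hist ga ha E p s))) = (p' i \<le> ha i (take (i-1) (hist ga ha E p s)))" by auto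
  qed
  have "{i \<in> {1..Suc s}. E i = Suc s \<and> p i \<le> ga i (take (i - 1) (hist ga ha E p s))}
     = {i \<in> {1..Suc s}. E i = Suc s \<and> p' i \<le> ga i (take (i - 1) (hist ga ha E p s))}"
     "{i \<in> {1..Suc s}. E i = Suc s \<and> p i \<le> ha i (take (i - 1) (hist ga ha E p s))}
     = {i \<in> {1..Suc s}. E i = Suc s \<and> p' i \<le> ha i (take (i - 1) (hist ga ha E p s))}"
    using kg kh by blast+
  then show ?case by (simp add: Let_def Suc.IH)
qed

definition subh :: "history \<Rightarrow> history \<Rightarrow> bool" where
  "subh H H' = list_all2 (\<lambda>(R, C) (R', C'). R \<subseteq> R' \<and> C \<subseteq> C') H H'"

lemma hist_mono:
  assumes mg: "monotone_rule ga" and mh: "monotone_rule ha"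
    and nn: "\<And>i H. 0 \<le> ga i H" and gh: "\<And>i H. ga i H \<le> ha i H" and h1: "\<And>i H. ha i H < 1"
    and pc: "\<And>i c. 0 \<le> c \<Longrightarrow> c < 1 \<Longrightarrow> p i \<le> c \<Longrightarrow> p' i \<le> c"
  shows "subh (hist ga ha E p s) (hist ga ha E p' s)"
proof (induction s)
  case 0 then show ?case by (simp add: subh_def)
next
  case (Suc s)
  let ?H = "hist ga ha E p s" and ?H' = "hist ga ha E p' s"
  have tk: "subh (take k ?H) (take k ?H')" for k
    using Suc.IH unfolding subh_def by (rule list_all2_takeI)
  have mg': "ga i (take k ?H) \<le> ga i (take k ?H')" for i k
    using mg tk unfolding monotone_rule_def subh_def by blast
  have mh': "ha i (take k ?H) \<le> ha i (take k ?H')" for i k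
    using mh tk unfolding monotone_rule_def subh_def by blast
  have A: "p' i \<le> ga i (take k ?H')" if "p i \<le> ga i (take k ?H)" for i k
  proof -
    have "p' i \<le> ga i (take k ?H)" using pc[OF nn _ that] gh h1 by (meson le_less_trans)
    then show ?thesis using mg' order_trans by blast
  qed
  have B: "p' i \<le> ha i (take k ?H')" if "p i \<le> ha i (take k ?H)" for i k
  proof -
    have "p' i \<le> ha i (take k ?H)" using pc[OF _ _ that] nn gh h1 by (meson order_trans)
    then show ?thesis using mh' order_trans by blast
  qed
  have "list_all2 (\<lambda>(R, C) (R', C'). R \<subseteq> R' \<and> C \<subseteq> C')
     [({i \<in> {1..Suc s}. E i = Suc s \<and> p i \<le> ga i (take (i - 1) ?H)},
       {i \<in> {1..Suc s}. E i = Suc s \<and> p i \<le> ha i (take (i - 1) ?H)})]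
     [({i \<in> {1..Suc s}. E i = Suc s \<and> p' i \<le> ga i (take (i - 1) ?H')},
       {i \<in> {1..Suc s}. E i = Suc s \<and> p' i \<le> ha i (take (i - 1) ?H')})]"
    using A B by auto
  then show ?case using Suc.IH unfolding subh_def by (simp add: Let_def list_all2_appendI)
qed


lemma set_eq_event:
  assumes "finite I" "\<And>i. i \<in> I \<Longrightarrow> {\<omega>\<in>space N. Q i \<omega>} \<in> sets N"
  shows "{\<omega>\<in>space N. {i\<in>I. Q i \<omega>} = r} \<in> sets N"
proof -
  have eq: "{\<omega>\<in>space N. {i\<in>I. Q i \<omega>} = r} =
     (if r \<subseteq> I then {\<omega>\<in>space N. \<forall>i\<in>I. (Q i \<omega> \<longleftrightarrow> i \<in> r)} else {})" by auto
  have "{\<omega>\<in>space N. \<forall>i\<in>I. (Q i \<omega> \<longleftrightarrow> i \<in> r)} \<in> sets N"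
  proof (rule sets.sets_Collect_finite_All[OF _ assms(1)])
    fix i assume i: "i \<in> I"
    show "{\<omega>\<in>space N. (Q i \<omega> \<longleftrightarrow> i \<in> r)} \<in> sets N"
    proof (cases "i \<in> r")
      case True then show ?thesis using assms(2)[OF i] by simp
    next
      case False then show ?thesis using sets.sets_Collect_neg[OF assms(2)[OF i]] by simp
    qed
  qed
  then show ?thesis unfolding eq by simp
qed

lemma hist_event:
  assumes "\<And>i c. 1 \<le> i \<Longrightarrow> {\<omega>\<in>space N. q \<omega> i \<le> c} \<in> sets N"
  shows "{\<omega>\<in>space N. hist ga ha E (q \<omega>) s = h} \<in> sets N"
proof (induction s arbitrary: h)
  case 0 then show ?case by (cases "h = []") auto
next
  case (Suc s)
  define I where "I = {i\<in>{1..Suc s}. E i = Suc s}"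
  have fI: "finite I" unfolding I_def by simp
  have ev: "{\<omega>\<in>space N. {i\<in>I. q \<omega> i \<le> c i} = r} \<in> sets N" for c r
    by (rule set_eq_event[OF fI]) (use assms in \<open>auto simp: I_def\<close>)
  have eq: "{\<omega>\<in>space N. hist ga ha E (q \<omega>) (Suc s) = h} = (if h = [] then {} else
     {\<omega>\<in>space N. hist ga ha E (q \<omega>) s = butlast h} \<inter>
     {\<omega>\<in>space N. {i\<in>I. q \<omega> i \<le> ga i (take (i-1) (butlast h))} = fst (last h)} \<inter>
     {\<omega>\<in>space N. {i\<in>I. q \<omega> i \<le> ha i (take (i-1) (butlast h))} = snd (last h)})"
    unfolding I_def by (auto simp: Let_def snoc_eq_iff_butlast)
  show ?case unfolding eq using Suc ev by auto
qed


lemma fin_ind_sum: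
  assumes "finite K" "\<And>\<omega>. \<omega> \<in> space M \<Longrightarrow> D \<omega> \<in> K" "\<omega> \<in> space M"
  shows "(\<Sum>d\<in>K. f d * indicator {\<omega>\<in>space M. D \<omega> = d} \<omega>) = (f (D \<omega>) :: ennreal)"
proof -
  have "(\<Sum>d\<in>K. f d * indicator {\<omega>\<in>space M. D \<omega> = d} \<omega>) = (\<Sum>d\<in>K. if d = D \<omega> then f d else 0)"
    using assms(3) by (intro sum.cong) (auto simp: indicator_def)
  also have "\<dots> = f (D \<omega>)" using assms by (simp add: sum.delta)
  finally show ?thesis .
qed

lemma fin_integral:
  assumes "finite K" "\<And>\<omega>. \<omega> \<in> space M \<Longrightarrow> D \<omega> \<in> K" "\<And>d. d \<in> K \<Longrightarrow> {\<omega>\<in>space M. D \<omega> = d} \<in> sets M"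
  shows "(\<integral>\<^sup>+\<omega>. \<phi> (D \<omega>) \<partial>M) = (\<Sum>d\<in>K. \<phi> d * emeasure M {\<omega>\<in>space M. D \<omega> = d})"
proof -
  have "(\<integral>\<^sup>+\<omega>. \<phi> (D \<omega>) \<partial>M) = (\<integral>\<^sup>+\<omega>. (\<Sum>d\<in>K. \<phi> d * indicator {\<omega>\<in>space M. D \<omega> = d} \<omega>) \<partial>M)"
    by (intro nn_integral_cong) (simp add: fin_ind_sum[OF assms(1,2)])
  also have "\<dots> = (\<Sum>d\<in>K. \<integral>\<^sup>+\<omega>. \<phi> d * indicator {\<omega>\<in>space M. D \<omega> = d} \<omega> \<partial>M)"
    using assms(3) by (intro nn_integral_sum) auto
  also have "\<dots> = (\<Sum>d\<in>K. \<phi> d * emeasure M {\<omega>\<in>space M. D \<omega> = d})"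
    using assms(3) by (intro sum.cong refl nn_integral_cmult_indicator) auto
  finally show ?thesis .
qed

lemma fin_integral2:
  assumes "finite K" "\<And>\<omega>. \<omega> \<in> space M \<Longrightarrow> D \<omega> \<in> K" "\<And>d. d \<in> K \<Longrightarrow> {\<omega>\<in>space M. D \<omega> = d} \<in> sets M"
    and "\<And>d. d \<in> K \<Longrightarrow> {\<omega>\<in>space M. R d \<omega>} \<in> sets M"
  shows "(\<integral>\<^sup>+\<omega>. (if R (D \<omega>) \<omega> then \<phi> (D \<omega>) else 0) \<partial>M)
     = (\<Sum>d\<in>K. \<phi> d * emeasure M ({\<omega>\<in>space M. R d \<omega>} \<inter> {\<omega>\<in>space M. D \<omega> = d}))"
proof -
  have "(\<integral>\<^sup>+\<omega>. (if R (D \<omega>) \<omega> then \<phi> (D \<omega>) else 0) \<partial>M) =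
     (\<integral>\<^sup>+\<omega>. (\<Sum>d\<in>K. \<phi> d * indicator ({\<omega>\<in>space M. R d \<omega>} \<inter> {\<omega>\<in>space M. D \<omega> = d}) \<omega>) \<partial>M)"
  proof (intro nn_integral_cong)
    fix \<omega> assume w: "\<omega> \<in> space M"
    have "(\<Sum>d\<in>K. \<phi> d * indicator ({\<omega>\<in>space M. R d \<omega>} \<inter> {\<omega>\<in>space M. D \<omega> = d}) \<omega>)
        = (\<Sum>d\<in>K. (if R d \<omega> then \<phi> d else 0) * indicator {\<omega>\<in>space M. D \<omega> = d} \<omega>)"
      by (intro sum.cong) (auto simp: indicator_def)
    also have "\<dots> = (if R (D \<omega>) \<omega> then \<phi> (D \<omega>) else 0)"
      by (rule fin_ind_sum[OF assms(1,2) w, where f="\<lambda>d. if R d \<omega> then \<phi> d else 0"])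
    finally show "(if R (D \<omega>) \<omega> then \<phi> (D \<omega>) else 0) = (\<Sum>d\<in>K. \<phi> d * indicator ({\<omega>\<in>space M. R d \<omega>} \<inter> {\<omega>\<in>space M. D \<omega> = d}) \<omega>)" by simp
  qed
  also have "\<dots> = (\<Sum>d\<in>K. \<integral>\<^sup>+\<omega>. \<phi> d * indicator ({\<omega>\<in>space M. R d \<omega>} \<inter> {\<omega>\<in>space M. D \<omega> = d}) \<omega> \<partial>M)"
    using assms(3,4) by (intro nn_integral_sum) auto
  also have "\<dots> = (\<Sum>d\<in>K. \<phi> d * emeasure M ({\<omega>\<in>space M. R d \<omega>} \<inter> {\<omega>\<in>space M. D \<omega> = d}))"
    using assms(3,4) by (intro sum.cong refl nn_integral_cmult_indicator) auto
  finally show ?thesis .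
qed

lemma fin_measurable:
  assumes "finite K" "\<And>\<omega>. \<omega> \<in> space M \<Longrightarrow> D \<omega> \<in> K" "\<And>d. d \<in> K \<Longrightarrow> {\<omega>\<in>space M. D \<omega> = d} \<in> sets M"
    and "\<And>d. d \<in> K \<Longrightarrow> \<Phi> d \<in> borel_measurable M"
  shows "(\<lambda>\<omega>. \<Phi> (D \<omega>) \<omega> :: ennreal) \<in> borel_measurable M"
proof -
  have "(\<lambda>\<omega>. (\<Sum>d\<in>K. \<Phi> d \<omega> * indicator {\<omega>\<in>space M. D \<omega> = d} \<omega>)) \<in> borel_measurable M"
    using assms(3,4) by (intro borel_measurable_sum borel_measurable_times borel_measurable_indicator) auto
  then show ?thesis
    by (rule measurable_cong[THEN iffD1, rotated]) (simp add: fin_ind_sum[OF assms(1,2)])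
qed

context sigma_finite_subalgebra
begin

lemma nn_cond_exp_le_int:
  assumes [measurable]: "f \<in> borel_measurable M" "g \<in> borel_measurable M"
    and le: "\<And>A. A \<in> sets F \<Longrightarrow> (\<integral>\<^sup>+ x \<in> A. f x \<partial>M) \<le> (\<integral>\<^sup>+ x \<in> A. g x \<partial>M)"
  shows "AE x in M. nn_cond_exp M F f x \<le> nn_cond_exp M F g x"
proof -
  define u where "u = nn_cond_exp M F f"
  define v where "v = nn_cond_exp M F g"
  have [measurable]: "u \<in> borel_measurable F" "v \<in> borel_measurable F" unfolding u_def v_def by simp_all
  have uM[measurable]: "u \<in> borel_measurable M" "v \<in> borel_measurable M" unfolding u_def v_def by simp_all
  define w where "w = (\<lambda>x. min (u x) (v x))"
  have [measurable]: "w \<in> borel_measurable F" unfolding w_def by simp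
  have ui: "(\<integral>\<^sup>+ x \<in> A. u x \<partial>M) = (\<integral>\<^sup>+ x \<in> A. f x \<partial>M)" if "A \<in> sets F" for A
  proof -
    have [measurable]: "A \<in> sets F" by fact
    have "(\<integral>\<^sup>+ x \<in> A. u x \<partial>M) = (\<integral>\<^sup>+ x. indicator A x * u x \<partial>M)" by (simp add: mult.commute)
    also have "\<dots> = (\<integral>\<^sup>+ x. indicator A x * f x \<partial>M)" unfolding u_def by (rule nn_cond_exp_intg) auto
    finally show ?thesis by (simp add: mult.commute)
  qed
  have vi: "(\<integral>\<^sup>+ x \<in> A. v x \<partial>M) = (\<integral>\<^sup>+ x \<in> A. g x \<partial>M)" if "A \<in> sets F" for A
  proof -
    have [measurable]: "A \<in> sets F" by fact
    have "(\<integral>\<^sup>+ x \<in> A. v x \<partial>M) = (\<integral>\<^sup>+ x. indicator A x * v x \<partial>M)" by (simp add: mult.commute)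
    also have "\<dots> = (\<integral>\<^sup>+ x. indicator A x * g x \<partial>M)" unfolding v_def by (rule nn_cond_exp_intg) auto
    finally show ?thesis by (simp add: mult.commute)
  qed
  have "AE x in M. w x = nn_cond_exp M F f x"
  proof (rule nn_cond_exp_charact)
    fix A assume A[measurable]: "A \<in> sets F"
    define B where "B = {x\<in>space M. v x < u x}"
    have B[measurable]: "B \<in> sets F" 
    proof -
      have "space F = space M" using subalg unfolding subalgebra_def by simp
      moreover have "{x\<in>space F. v x < u x} \<in> sets F" by measurable
      ultimately show ?thesis unfolding B_def by simp
    qed
    have AB[measurable]: "A \<inter> B \<in> sets F" "A - B \<in> sets F" by auto
    have AM[measurable]: "A \<in> sets M" "A \<inter> B \<in> sets M" "A - B \<in> sets M"
      using subalg AB A unfolding subalgebra_def by auto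
    have split: "(\<integral>\<^sup>+ x \<in> A. h x \<partial>M) = (\<integral>\<^sup>+ x \<in> A \<inter> B. h x \<partial>M) + (\<integral>\<^sup>+ x \<in> A - B. h x \<partial>M)"
      if [measurable]: "h \<in> borel_measurable M" for h
    proof -
      have "(\<integral>\<^sup>+ x \<in> A. h x \<partial>M) = (\<integral>\<^sup>+ x. h x * indicator (A \<inter> B) x + h x * indicator (A - B) x \<partial>M)"
        by (intro nn_integral_cong) (auto simp: indicator_def)
      also have "\<dots> = (\<integral>\<^sup>+ x \<in> A \<inter> B. h x \<partial>M) + (\<integral>\<^sup>+ x \<in> A - B. h x \<partial>M)"
        by (rule nn_integral_add) auto
      finally show ?thesis .
    qed
    have wM[measurable]: "w \<in> borel_measurable M" unfolding w_def by simp
    have le1: "(\<integral>\<^sup>+ x \<in> A \<inter> B. u x \<partial>M) \<le> (\<integral>\<^sup>+ x \<in> A \<inter> B. v x \<partial>M)"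
      using ui[OF AB(1)] vi[OF AB(1)] le[OF AB(1)] by simp
    have le2: "(\<integral>\<^sup>+ x \<in> A \<inter> B. v x \<partial>M) \<le> (\<integral>\<^sup>+ x \<in> A \<inter> B. u x \<partial>M)"
      by (intro nn_integral_mono) (auto simp: B_def indicator_def)
    have e1: "(\<integral>\<^sup>+ x \<in> A \<inter> B. u x \<partial>M) = (\<integral>\<^sup>+ x \<in> A \<inter> B. w x \<partial>M)"
    proof -
      have "(\<integral>\<^sup>+ x \<in> A \<inter> B. w x \<partial>M) = (\<integral>\<^sup>+ x \<in> A \<inter> B. v x \<partial>M)"
        unfolding w_def by (intro nn_integral_cong) (auto simp: B_def indicator_def min_def)
      then show ?thesis using antisym[OF le1 le2] by simp
    qed
    have e2: "(\<integral>\<^sup>+ x \<in> A - B. u x \<partial>M) = (\<integral>\<^sup>+ x \<in> A - B. w x \<partial>M)"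
      unfolding w_def by (intro nn_integral_cong) (auto simp: B_def indicator_def min_def)
    have "(\<integral>\<^sup>+ x \<in> A. f x \<partial>M) = (\<integral>\<^sup>+ x \<in> A. u x \<partial>M)" using ui[OF A] by simp
    also have "\<dots> = (\<integral>\<^sup>+ x \<in> A. w x \<partial>M)" using split[of u] split[of w] e1 e2 by simp
    finally show "(\<integral>\<^sup>+ x \<in> A. f x \<partial>M) = (\<integral>\<^sup>+ x \<in> A. w x \<partial>M)" .
  qed auto
  then show ?thesis unfolding u_def[symmetric] v_def[symmetric]
    by (rule eventually_mono) (auto simp: w_def min_def split: if_splits)
qed

end


theorem lemma1:
  fixes M :: "'a measure"
    and P :: "nat \<Rightarrow> 'a \<Rightarrow> real"
    and H0 :: "nat set"
    and E :: "nat \<Rightarrow> nat"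
    and ga ha :: "nat \<Rightarrow> history \<Rightarrow> real"
    and Mh t :: nat
    and g :: "nat list \<Rightarrow> real"
  assumes prob: "prob_space M"
    and meas: "\<And>i. P i \<in> borel_measurable M"
    and superunif: "\<And>i u. i \<in> H0 \<Longrightarrow> 0 \<le> u \<Longrightarrow> u \<le> 1 \<Longrightarrow>
                      measure M {\<omega> \<in> space M. P i \<omega> \<le> u} \<le> u"
    and indep: "prob_space.indep_sets M
        (\<lambda>k. case k of Some i \<Rightarrow> sigma_sets (space M) (rv_events M (P i))
                     | None \<Rightarrow> sigma_sets (space M) (\<Union>i\<in>{1..} - H0. rv_events M (P i)))
        (Some ` H0 \<union> {None})"
    and dec: "\<And>i. 1 \<le> i \<Longrightarrow> i \<le> E i"
    and alpha_nonneg: "\<And>i H. 0 \<le> ga i H"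
    and alpha_le_lambda: "\<And>i H. ga i H \<le> ha i H"
    and lambda_lt1: "\<And>i H. ha i H < 1"
    and mono_g: "monotone_rule ga"
    and mono_h: "monotone_rule ha"
    and g_pos: "\<And>xs. length xs = Mh \<Longrightarrow> 0 < g xs"
    and g_mono: "\<And>xs ys. length xs = Mh \<Longrightarrow> length ys = Mh \<Longrightarrow> list_all2 (\<le>) xs ys \<Longrightarrow> g xs \<le> g ys"
    and t: "1 \<le> t" "t \<le> Mh" "t \<in> H0"
  defines "F \<equiv> vimage_algebra (space M) (\<lambda>\<omega>. hist ga ha E (\<lambda>i. P i \<omega>) (E t - 1)) (count_space UNIV)"
    and "alpha \<equiv> (\<lambda>\<omega>. test_level ga ha E (\<lambda>i. P i \<omega>) t)"
    and "lambda \<equiv> (\<lambda>\<omega>. cand_threshold ga ha E (\<lambda>i. P i \<omega>) t)"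
    and "G \<equiv> (\<lambda>\<omega>. g (map (\<lambda>s. card (rej_set ga ha E (\<lambda>i. P i \<omega>) s)) [1..<Mh + 1]))"
  shows "AE \<omega> in M.
           nn_cond_exp M F (\<lambda>\<omega>. ennreal (alpha \<omega> / G \<omega>)) \<omega>
             \<le> nn_cond_exp M F (\<lambda>\<omega>. ennreal (alpha \<omega> * (if P t \<omega> > lambda \<omega> then 1 else 0)
                                              / ((1 - lambda \<omega>) * G \<omega>))) \<omega>
         \<and> nn_cond_exp M F (\<lambda>\<omega>. ennreal ((if P t \<omega> \<le> alpha \<omega> then 1 else 0) / G \<omega>)) \<omega>
             \<le> nn_cond_exp M F (\<lambda>\<omega>. ennreal (alpha \<omega> / G \<omega>)) \<omega>"
proof -
  interpret prob_space M by (rule prob)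
  define N where "N = max Mh (E t)"
  define q0 where "q0 = (\<lambda>\<omega> i. if i = t then (0::real) else P i \<omega>)"
  define q1 where "q1 = (\<lambda>\<omega> i. if i = t then (1::real) else P i \<omega>)"
  define Hd where "Hd = (\<lambda>\<omega>. hist ga ha E (\<lambda>i. P i \<omega>) N)"
  define H0d where "H0d = (\<lambda>\<omega>. hist ga ha E (q0 \<omega>) N)"
  define H1d where "H1d = (\<lambda>\<omega>. hist ga ha E (q1 \<omega>) N)"
  define K where "K = {h::history. set h \<subseteq> Pow {1..N} \<times> Pow {1..N} \<and> length h = N}"
  have fK: "finite K" unfolding K_def by (intro finite_lists_length_eq) auto
  have inK: "\<And>x. hist ga ha E x N \<in> K" unfolding K_def using hist_set hist_length by auto
  define a where "a = (\<lambda>d::history. ga t (take (t-1) d))"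
  define l where "l = (\<lambda>d::history. ha t (take (t-1) d))"
  define Gf where "Gf = (\<lambda>d::history. g (map (\<lambda>s. card (fst (d ! (s-1)))) [1..<Mh+1]))"
  have tN: "t \<le> N" "E t \<le> N" "Mh \<le> N" using t by (auto simp: N_def)
  have tE: "t \<le> E t" using dec t by auto
  have early: "hist ga ha E (\<lambda>i. P i \<omega>) s = hist ga ha E (q0 \<omega>) s \<and> hist ga ha E (\<lambda>i. P i \<omega>) s = hist ga ha E (q1 \<omega>) s"
    if "s < E t" for \<omega> s
    using that by (intro conjI hist_early[where t=t]) (auto simp: q0_def q1_def)
  have tk: "take s (hist ga ha E x N) = hist ga ha E x s" if "s \<le> N" for x s
    using that by (rule hist_take)
  have alpha_eq: "alpha \<omega> = a (Hd \<omega>) \<and> alpha \<omega> = a (H0d \<omega>) \<and> alpha \<omega> = a (H1d \<omega>)" for \<omega>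
  proof -
    have "t - 1 < E t" "t - 1 \<le> N" using tE tN t by auto
    then show ?thesis unfolding alpha_def test_level_def a_def Hd_def H0d_def H1d_def
      using tk early by metis
  qed
  have lambda_eq: "lambda \<omega> = l (Hd \<omega>) \<and> lambda \<omega> = l (H0d \<omega>) \<and> lambda \<omega> = l (H1d \<omega>)" for \<omega>
  proof -
    have "t - 1 < E t" "t - 1 \<le> N" using tE tN t by auto
    then show ?thesis unfolding lambda_def cand_threshold_def l_def Hd_def H0d_def H1d_def
      using tk early by metis
  qed
  have A_eq: "hist ga ha E (\<lambda>i. P i \<omega>) (E t - 1) = take (E t - 1) (Hd \<omega>) \<and>
      hist ga ha E (\<lambda>i. P i \<omega>) (E t - 1) = take (E t - 1) (H0d \<omega>) \<and>
      hist ga ha E (\<lambda>i. P i \<omega>) (E t - 1) = take (E t - 1) (H1d \<omega>)" for \<omega>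
  proof -
    have "E t - 1 < E t" "E t - 1 \<le> N" using tE tN t by auto
    then show ?thesis unfolding Hd_def H0d_def H1d_def using tk early by metis
  qed
  have G_eq: "G \<omega> = Gf (Hd \<omega>)" for \<omega>
    unfolding G_def Gf_def
  proof (intro arg_cong[where f=g] map_cong refl)
    fix s assume "s \<in> set [1..<Mh + 1]"
    then have s: "1 \<le> s" "s \<le> N" using tN by auto
    have "rej_set ga ha E (\<lambda>i. P i \<omega>) s = fst (take s (Hd \<omega>) ! (s - 1))"
      unfolding rej_set_def Hd_def using tk[OF s(2)] by simp
    also have "\<dots> = fst (Hd \<omega> ! (s - 1))" using s by simp
    finally show "card (rej_set ga ha E (\<lambda>i. P i \<omega>) s) = card (fst (Hd \<omega> ! (s - 1)))" by simp
  qed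
  have Gf_pos: "0 < Gf d" for d unfolding Gf_def by (rule g_pos) simp
  have Gf_mono: "Gf d \<le> Gf d'" if d: "d \<in> K" "d' \<in> K" "subh d d'" for d d'
    unfolding Gf_def
  proof (rule g_mono)
    show "list_all2 (\<le>) (map (\<lambda>s. card (fst (d ! (s - 1)))) [1..<Mh + 1]) (map (\<lambda>s. card (fst (d' ! (s - 1)))) [1..<Mh + 1])"
      unfolding list_all2_conv_all_nth
    proof (intro conjI allI impI)
      fix i assume "i < length (map (\<lambda>s. card (fst (d ! (s - 1)))) [1..<Mh + 1])"
      then have i: "i < Mh" by (simp del: upt_Suc)
      then have iN: "i < length d" "i < length d'" using d tN unfolding K_def by auto
      have "fst (d ! i) \<subseteq> fst (d' ! i)" using list_all2_nthD[OF d(3)[unfolded subh_def] iN(1)]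
        by (auto split: prod.splits)
      moreover have "fst (d' ! i) \<subseteq> {1..N}"
      proof -
        have "d' ! i \<in> Pow {1..N} \<times> Pow {1..N}" using nth_mem[OF iN(2)] d(2) unfolding K_def by blast
        then show ?thesis by (auto simp: mem_Times_iff)
      qed
      ultimately have "card (fst (d ! i)) \<le> card (fst (d' ! i))"
        by (meson card_mono finite_atLeastAtMost finite_subset)
      then show "map (\<lambda>s. card (fst (d ! (s - 1)))) [1..<Mh + 1] ! i \<le> map (\<lambda>s. card (fst (d' ! (s - 1)))) [1..<Mh + 1] ! i"
        using i by (simp del: upt_Suc add: nth_map)
    qed simp
  qed simp_all
  have sub0: "subh (Hd \<omega>) (H0d \<omega>)" for \<omega>
    unfolding Hd_def H0d_def
    by (rule hist_mono[OF mono_g mono_h alpha_nonneg alpha_le_lambda lambda_lt1]) (auto simp: q0_def)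
  have sub1: "subh (H1d \<omega>) (Hd \<omega>)" for \<omega>
    unfolding Hd_def H1d_def
    by (rule hist_mono[OF mono_g mono_h alpha_nonneg alpha_le_lambda lambda_lt1]) (auto simp: q1_def split: if_splits)
  have same0: "Hd \<omega> = H0d \<omega>" if "P t \<omega> \<le> alpha \<omega>" for \<omega>
    unfolding Hd_def H0d_def
  proof (rule hist_same[where t=t])
    show "(P t \<omega> \<le> ga t (hist ga ha E (\<lambda>i. P i \<omega>) (t - 1))) = (q0 \<omega> t \<le> ga t (hist ga ha E (\<lambda>i. P i \<omega>) (t - 1)))"
      using that alpha_nonneg unfolding alpha_def test_level_def q0_def by auto
    show "(P t \<omega> \<le> ha t (hist ga ha E (\<lambda>i. P i \<omega>) (t - 1))) = (q0 \<omega> t \<le> ha t (hist ga ha E (\<lambda>i. P i \<omega>) (t - 1)))"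
      using that alpha_nonneg alpha_le_lambda unfolding alpha_def test_level_def q0_def by (smt (verit))
  qed (use t tE in \<open>auto simp: q0_def\<close>)
  have same1: "Hd \<omega> = H1d \<omega>" if "lambda \<omega> < P t \<omega>" for \<omega>
    unfolding Hd_def H1d_def
  proof (rule hist_same[where t=t])
    show "(P t \<omega> \<le> ga t (hist ga ha E (\<lambda>i. P i \<omega>) (t - 1))) = (q1 \<omega> t \<le> ga t (hist ga ha E (\<lambda>i. P i \<omega>) (t - 1)))"
      using that alpha_le_lambda[of t] lambda_lt1[of t] unfolding lambda_def cand_threshold_def q1_def
      by (smt (verit))
    show "(P t \<omega> \<le> ha t (hist ga ha E (\<lambda>i. P i \<omega>) (t - 1))) = (q1 \<omega> t \<le> ha t (hist ga ha E (\<lambda>i. P i \<omega>) (t - 1)))"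
      using that lambda_lt1[of t] unfolding lambda_def cand_threshold_def q1_def by (smt (verit))
  qed (use t tE in \<open>auto simp: q1_def\<close>)
  define Ek where "Ek = (\<lambda>k. case k of Some i \<Rightarrow> sigma_sets (space M) (rv_events M (P i))
                     | None \<Rightarrow> sigma_sets (space M) (\<Union>i\<in>{1..} - H0. rv_events M (P i)))"
  define Idx where "Idx = Some ` H0 \<union> {None}"
  have ind: "indep_sets Ek Idx" using indep unfolding Ek_def Idx_def .
  have rv_sub: "rv_events M (P i) \<subseteq> Pow (space M)" for i unfolding rv_events_def by auto
  have Ek_ev: "Ek k \<subseteq> sets M" if "k \<in> Idx" for k using ind that unfolding indep_sets_def by auto
  have Ek_alg: "sigma_algebra (space M) (Ek k)" for k
    unfolding Ek_def using rv_sub by (cases k) (auto intro!: sigma_algebra_sigma_sets)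
  define Gen where "Gen = (\<Union>k\<in>Idx - {Some t}. Ek k)"
  have Gen_ev: "Gen \<subseteq> sets M" unfolding Gen_def using Ek_ev by auto
  have Gen_sub: "Gen \<subseteq> Pow (space M)" using Gen_ev sets.sets_into_space by auto
  define MW where "MW = sigma (space M) Gen"
  have sMW: "sets MW = sigma_sets (space M) Gen" "space MW = space M"
    using Gen_sub by (simp_all add: MW_def sets_measure_of space_measure_of_conv)
  have MW_sub: "sets MW \<subseteq> sets M" unfolding sMW(1) using Gen_ev by (rule sets.sigma_sets_subset)
  define I2 where "I2 = (\<lambda>b::bool. if b then {Some t} else Idx - {Some t})"
  have I2U: "(\<Union>b. I2 b) = Idx" using t(3) unfolding I2_def Idx_def by auto
  have Ind2: "indep_sets (\<lambda>b. sigma_sets (space M) (\<Union>i\<in>I2 b. Ek i)) UNIV"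
  proof (rule indep_sets_collect_sigma)
    show "indep_sets Ek (\<Union>b\<in>UNIV. I2 b)" using ind I2U by simp
    show "Int_stable (Ek i)" for i using Ek_alg[of i] unfolding sigma_algebra_def by (meson algebra.Int_stable)
    show "disjoint_family_on I2 UNIV" unfolding disjoint_family_on_def I2_def by auto
  qed
  have indP: "prob (S \<inter> B) = prob S * prob B" if S: "S \<in> rv_events M (P t)" and B: "B \<in> sets MW" for S B
  proof -
    have "prob (\<Inter>j\<in>UNIV. (\<lambda>b. if b then S else B) j) = (\<Prod>j\<in>UNIV. prob ((\<lambda>b. if b then S else B) j))"
    proof (rule indep_setsD[OF Ind2])
      have "S \<in> Ek (Some t)" unfolding Ek_def using S by auto
      then have "S \<in> sigma_sets (space M) (\<Union>i\<in>I2 True. Ek i)" unfolding I2_def by auto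
      moreover have "B \<in> sigma_sets (space M) (\<Union>i\<in>I2 False. Ek i)" using B unfolding sMW Gen_def I2_def by simp
      ultimately show "\<forall>j\<in>UNIV. (if j then S else B) \<in> sigma_sets (space M) (\<Union>i\<in>I2 j. Ek i)" by auto
    qed auto
    then show ?thesis by (simp add: UNIV_bool Int_commute mult.commute)
  qed
  have Pev_gen: "{\<omega>\<in>space M. P i \<omega> \<le> c} \<in> sets MW" if "1 \<le> i" "i \<noteq> t" for i c
  proof -
    have r: "{\<omega>\<in>space M. P i \<omega> \<le> c} \<in> rv_events M (P i)"
      unfolding rv_events_def by (intro CollectI exI[of _ "{..c}"]) auto
    have "{\<omega>\<in>space M. P i \<omega> \<le> c} \<in> Gen"
    proof (cases "i \<in> H0")
      case True
      then have "Some i \<in> Idx - {Some t}" using that unfolding Idx_def by auto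
      moreover have "{\<omega>\<in>space M. P i \<omega> \<le> c} \<in> Ek (Some i)" unfolding Ek_def using r by auto
      ultimately show ?thesis unfolding Gen_def by blast
    next
      case False
      then have "None \<in> Idx - {Some t}" unfolding Idx_def by auto
      moreover have "{\<omega>\<in>space M. P i \<omega> \<le> c} \<in> Ek None" unfolding Ek_def option.case using r False that
        by (intro sigma_sets.Basic) auto
      ultimately show ?thesis unfolding Gen_def by blast
    qed
    then show ?thesis unfolding sMW by auto
  qed
  have q0ev: "{\<omega>\<in>space MW. q0 \<omega> i \<le> c} \<in> sets MW" if "1 \<le> i" for i c
  proof (cases "i = t")
    case True
    then have "{\<omega>\<in>space MW. q0 \<omega> i \<le> c} = (if 0 \<le> c then space MW else {})" unfolding q0_def by auto
    then show ?thesis by simp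
  next
    case False then show ?thesis using Pev_gen[OF that False] unfolding q0_def sMW(2) by simp
  qed
  have q1ev: "{\<omega>\<in>space MW. q1 \<omega> i \<le> c} \<in> sets MW" if "1 \<le> i" for i c
  proof (cases "i = t")
    case True
    then have "{\<omega>\<in>space MW. q1 \<omega> i \<le> c} = (if 1 \<le> c then space MW else {})" unfolding q1_def by auto
    then show ?thesis by simp
  next
    case False then show ?thesis using Pev_gen[OF that False] unfolding q1_def sMW(2) by simp
  qed
  have H0ev: "{\<omega>\<in>space M. H0d \<omega> = d} \<in> sets MW" for d
    using hist_event[of MW q0, OF q0ev] unfolding H0d_def sMW(2) by blast
  have H1ev: "{\<omega>\<in>space M. H1d \<omega> = d} \<in> sets MW" for d
    using hist_event[of MW q1, OF q1ev] unfolding H1d_def sMW(2) by blast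
  have Hev: "{\<omega>\<in>space M. Hd \<omega> = d} \<in> sets M" for d
    using hist_event[of M "\<lambda>\<omega> i. P i \<omega>"] meas unfolding Hd_def by measurable
  have H0evM: "{\<omega>\<in>space M. H0d \<omega> = d} \<in> sets M" for d using H0ev MW_sub by auto
  have H1evM: "{\<omega>\<in>space M. H1d \<omega> = d} \<in> sets M" for d using H1ev MW_sub by auto
  define f where "f = (\<lambda>\<omega>. hist ga ha E (\<lambda>i. P i \<omega>) (E t - 1))"
  have sF: "sets F = {f -` S \<inter> space M | S. S \<in> sets (count_space UNIV)}"
    unfolding F_def f_def by (rule sets_vimage_algebra2) auto
  have Hset: "{\<omega>\<in>space M. Q (Hd \<omega>)} \<in> sets M" for Q
  proof -
    have "{\<omega>\<in>space M. Q (Hd \<omega>)} = (\<Union>d\<in>{d\<in>K. Q d}. {\<omega>\<in>space M. Hd \<omega> = d})"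
      using inK unfolding Hd_def by auto
    also have "\<dots> \<in> sets M" using fK Hev by (intro sets.finite_UN) auto
    finally show ?thesis .
  qed
  have FA: "\<exists>S. A = {\<omega>\<in>space M. take (E t - 1) (Hd \<omega>) \<in> S}" if AF: "A \<in> sets F" for A
  proof -
    have "A \<in> {f -` S \<inter> space M | S. S \<in> sets (count_space UNIV)}" using AF sF by simp
    then obtain S where "A = f -` S \<inter> space M" by auto
    then have "A = {\<omega>\<in>space M. take (E t - 1) (Hd \<omega>) \<in> S}" unfolding f_def using A_eq by auto
    then show ?thesis by (rule exI)
  qed
  have subalg: "subalgebra M F"
    unfolding subalgebra_def
  proof
    show "space F = space M" unfolding F_def by simp
    show "sets F \<subseteq> sets M"
    proof
      fix A assume "A \<in> sets F"
      then obtain S where "A = {\<omega>\<in>space M. take (E t - 1) (Hd \<omega>) \<in> S}" using FA by blast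
      then show "A \<in> sets M" using Hset by simp
    qed
  qed
  have sfs: "sigma_finite_subalgebra M F"
    by (intro finite_measure_subalgebra_is_sigma_finite finite_measure_subalgebra.intro
        finite_measure_subalgebra_axioms.intro subalg finite_measure_axioms)
  interpret S: sigma_finite_subalgebra M F by (rule sfs)
  define f1 where "f1 = (\<lambda>\<omega>. ennreal (alpha \<omega> / G \<omega>))"
  define f2 where "f2 = (\<lambda>\<omega>. ennreal ((if P t \<omega> \<le> alpha \<omega> then 1 else 0) / G \<omega>))"
  define f3 where "f3 = (\<lambda>\<omega>. ennreal (alpha \<omega> * (if P t \<omega> > lambda \<omega> then 1 else 0)
                                              / ((1 - lambda \<omega>) * G \<omega>)))"
  have HinK: "\<And>\<omega>. \<omega> \<in> space M \<Longrightarrow> Hd \<omega> \<in> K" "\<And>\<omega>. \<omega> \<in> space M \<Longrightarrow> H0d \<omega> \<in> K"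
     "\<And>\<omega>. \<omega> \<in> space M \<Longrightarrow> H1d \<omega> \<in> K"
    unfolding Hd_def H0d_def H1d_def using inK by auto
  have f1M: "f1 \<in> borel_measurable M"
  proof -
    have "f1 = (\<lambda>\<omega>. (\<lambda>d \<omega>. ennreal (a d / Gf d)) (Hd \<omega>) \<omega>)" unfolding f1_def using alpha_eq G_eq by auto
    also have "\<dots> \<in> borel_measurable M" by (rule fin_measurable[OF fK HinK(1) Hev]) measurable
    finally show ?thesis .
  qed
  have f2M: "f2 \<in> borel_measurable M"
  proof -
    have "f2 = (\<lambda>\<omega>. (\<lambda>d \<omega>. ennreal ((if P t \<omega> \<le> a d then 1 else 0) / Gf d)) (Hd \<omega>) \<omega>)"
      unfolding f2_def using alpha_eq G_eq by auto
    also have "\<dots> \<in> borel_measurable M" by (rule fin_measurable[OF fK HinK(1) Hev]) (use meas in measurable)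
    finally show ?thesis .
  qed
  have f3M: "f3 \<in> borel_measurable M"
  proof -
    have "f3 = (\<lambda>\<omega>. (\<lambda>d \<omega>. ennreal (a d * (if P t \<omega> > l d then 1 else 0) / ((1 - l d) * Gf d))) (Hd \<omega>) \<omega>)"
      unfolding f3_def using alpha_eq lambda_eq G_eq by auto
    also have "\<dots> \<in> borel_measurable M" by (rule fin_measurable[OF fK HinK(1) Hev]) (use meas in measurable)
    finally show ?thesis .
  qed
  have I1: "(\<integral>\<^sup>+x\<in>A. f2 x \<partial>M) \<le> (\<integral>\<^sup>+x\<in>A. f1 x \<partial>M)" if AF: "A \<in> sets F" for A
  proof -
    obtain S where A: "A = {\<omega>\<in>space M. take (E t - 1) (Hd \<omega>) \<in> S}" using FA[OF AF] by blast
    define InS where "InS = (\<lambda>d::history. take (E t - 1) d \<in> S)"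
    have indA: "indicator A \<omega> = (if InS (H0d \<omega>) then 1 else 0 :: ennreal)" if "\<omega> \<in> space M" for \<omega>
      using that A_eq[of \<omega>] unfolding A InS_def by (auto simp: indicator_def)
    define \<phi>0 where "\<phi>0 = (\<lambda>d. ennreal (1 / Gf d) * (if InS d then 1 else 0))"
    have "(\<integral>\<^sup>+x\<in>A. f2 x \<partial>M) = (\<integral>\<^sup>+\<omega>. (if P t \<omega> \<le> a (H0d \<omega>) then \<phi>0 (H0d \<omega>) else 0) \<partial>M)"
    proof (rule nn_integral_cong)
      fix \<omega> assume w: "\<omega> \<in> space M"
      show "f2 \<omega> * indicator A \<omega> = (if P t \<omega> \<le> a (H0d \<omega>) then \<phi>0 (H0d \<omega>) else 0)"
      proof (cases "P t \<omega> \<le> alpha \<omega>")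
        case True
        then have "Hd \<omega> = H0d \<omega>" by (rule same0)
        then show ?thesis using True alpha_eq[of \<omega>] G_eq[of \<omega>] indA[OF w] unfolding f2_def \<phi>0_def by simp
      next
        case False
        then show ?thesis using alpha_eq[of \<omega>] unfolding f2_def by simp
      qed
    qed
    also have "\<dots> = (\<Sum>d\<in>K. \<phi>0 d * emeasure M ({\<omega>\<in>space M. P t \<omega> \<le> a d} \<inter> {\<omega>\<in>space M. H0d \<omega> = d}))"
      by (rule fin_integral2[OF fK HinK(2) H0evM]) (use meas in measurable)
    also have "\<dots> \<le> (\<Sum>d\<in>K. (\<phi>0 d * ennreal (a d)) * emeasure M {\<omega>\<in>space M. H0d \<omega> = d})"
    proof (rule sum_mono)
      fix d assume "d \<in> K"
      have Sr: "{\<omega>\<in>space M. P t \<omega> \<le> a d} \<in> rv_events M (P t)"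
        unfolding rv_events_def by (intro CollectI exI[of _ "{..a d}"]) auto
      have ad: "0 \<le> a d" "a d \<le> 1"
        using alpha_nonneg[of t "take (t-1) d"] alpha_le_lambda[of t "take (t-1) d"] lambda_lt1[of t "take (t-1) d"]
        unfolding a_def by auto
      have "emeasure M ({\<omega>\<in>space M. P t \<omega> \<le> a d} \<inter> {\<omega>\<in>space M. H0d \<omega> = d})
          = ennreal (prob {\<omega>\<in>space M. P t \<omega> \<le> a d}) * ennreal (prob {\<omega>\<in>space M. H0d \<omega> = d})"
        using indP[OF Sr H0ev] by (simp add: emeasure_eq_measure ennreal_mult)
      also have "\<dots> \<le> ennreal (a d) * emeasure M {\<omega>\<in>space M. H0d \<omega> = d}"
        using superunif[OF t(3) ad] by (auto simp: emeasure_eq_measure intro!: mult_right_mono ennreal_leI)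
      finally show "\<phi>0 d * emeasure M ({\<omega>\<in>space M. P t \<omega> \<le> a d} \<inter> {\<omega>\<in>space M. H0d \<omega> = d})
          \<le> (\<phi>0 d * ennreal (a d)) * emeasure M {\<omega>\<in>space M. H0d \<omega> = d}"
        by (simp add: mult.assoc mult_left_mono)
    qed
    also have "\<dots> = (\<integral>\<^sup>+\<omega>. \<phi>0 (H0d \<omega>) * ennreal (a (H0d \<omega>)) \<partial>M)"
      by (rule fin_integral[OF fK HinK(2) H0evM, symmetric])
    also have "\<dots> \<le> (\<integral>\<^sup>+x\<in>A. f1 x \<partial>M)"
    proof (rule nn_integral_mono)
      fix \<omega> assume w: "\<omega> \<in> space M"
      have gle: "Gf (Hd \<omega>) \<le> Gf (H0d \<omega>)" using Gf_mono[OF HinK(1)[OF w] HinK(2)[OF w] sub0] .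
      have an: "0 \<le> a (H0d \<omega>)" unfolding a_def by (rule alpha_nonneg)
      have "a (H0d \<omega>) / Gf (H0d \<omega>) \<le> alpha \<omega> / G \<omega>"
        using alpha_eq[of \<omega>] G_eq[of \<omega>] gle Gf_pos[of "Hd \<omega>"] Gf_pos[of "H0d \<omega>"] an
        by (auto intro!: divide_left_mono)
      then have "ennreal (1 / Gf (H0d \<omega>)) * ennreal (a (H0d \<omega>)) \<le> ennreal (alpha \<omega> / G \<omega>)"
        using an Gf_pos[of "H0d \<omega>"] by (simp add: ennreal_mult[symmetric] ennreal_leI)
      then show "\<phi>0 (H0d \<omega>) * ennreal (a (H0d \<omega>)) \<le> f1 \<omega> * indicator A \<omega>"
        unfolding \<phi>0_def f1_def indA[OF w] by simp
    qed
    finally show ?thesis .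
  qed
  have I2: "(\<integral>\<^sup>+x\<in>A. f1 x \<partial>M) \<le> (\<integral>\<^sup>+x\<in>A. f3 x \<partial>M)" if AF: "A \<in> sets F" for A
  proof -
    obtain S where A: "A = {\<omega>\<in>space M. take (E t - 1) (Hd \<omega>) \<in> S}" using FA[OF AF] by blast
    define InS where "InS = (\<lambda>d::history. take (E t - 1) d \<in> S)"
    have indA: "indicator A \<omega> = (if InS (H1d \<omega>) then 1 else 0 :: ennreal)" if "\<omega> \<in> space M" for \<omega>
      using that A_eq[of \<omega>] unfolding A InS_def by (auto simp: indicator_def)
    define \<psi> where "\<psi> = (\<lambda>d. ennreal (a d / Gf d) * (if InS d then 1 else 0))"
    define \<psi>' where "\<psi>' = (\<lambda>d. ennreal (a d / ((1 - l d) * Gf d)) * (if InS d then 1 else 0))"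
    have "(\<integral>\<^sup>+x\<in>A. f1 x \<partial>M) \<le> (\<integral>\<^sup>+\<omega>. \<psi> (H1d \<omega>) \<partial>M)"
    proof (rule nn_integral_mono)
      fix \<omega> assume w: "\<omega> \<in> space M"
      have gle: "Gf (H1d \<omega>) \<le> Gf (Hd \<omega>)" using Gf_mono[OF HinK(3)[OF w] HinK(1)[OF w] sub1] .
      have an: "0 \<le> a (H1d \<omega>)" unfolding a_def by (rule alpha_nonneg)
      have "alpha \<omega> / G \<omega> \<le> a (H1d \<omega>) / Gf (H1d \<omega>)"
        using alpha_eq[of \<omega>] G_eq[of \<omega>] gle Gf_pos[of "Hd \<omega>"] Gf_pos[of "H1d \<omega>"] an
        by (auto intro!: divide_left_mono)
      then show "f1 \<omega> * indicator A \<omega> \<le> \<psi> (H1d \<omega>)"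
        unfolding \<psi>_def f1_def indA[OF w] by (simp add: ennreal_leI)
    qed
    also have "\<dots> = (\<Sum>d\<in>K. \<psi> d * emeasure M {\<omega>\<in>space M. H1d \<omega> = d})"
      by (rule fin_integral[OF fK HinK(3) H1evM])
    also have "\<dots> \<le> (\<Sum>d\<in>K. \<psi>' d * emeasure M ({\<omega>\<in>space M. l d < P t \<omega>} \<inter> {\<omega>\<in>space M. H1d \<omega> = d}))"
    proof (rule sum_mono)
      fix d assume "d \<in> K"
      have Sr: "{\<omega>\<in>space M. l d < P t \<omega>} \<in> rv_events M (P t)"
        unfolding rv_events_def by (intro CollectI exI[of _ "{l d<..}"]) auto
      have ld: "0 \<le> l d" "l d \<le> 1" "l d < 1"
        using alpha_nonneg[of t "take (t-1) d"] alpha_le_lambda[of t "take (t-1) d"] lambda_lt1[of t "take (t-1) d"]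
        unfolding l_def by auto
      have an: "0 \<le> a d" unfolding a_def by (rule alpha_nonneg)
      have Sle: "{\<omega>\<in>space M. P t \<omega> \<le> l d} \<in> sets M" using meas by measurable
      have "{\<omega>\<in>space M. l d < P t \<omega>} = space M - {\<omega>\<in>space M. P t \<omega> \<le> l d}" by auto
      then have "prob {\<omega>\<in>space M. l d < P t \<omega>} = 1 - prob {\<omega>\<in>space M. P t \<omega> \<le> l d}"
        using prob_compl[OF Sle] by simp
      then have pS: "1 - l d \<le> prob {\<omega>\<in>space M. l d < P t \<omega>}" using superunif[OF t(3) ld(1,2)] by simp
      have psi: "\<psi> d = \<psi>' d * ennreal (1 - l d)"
      proof -
        have "a d / ((1 - l d) * Gf d) * (1 - l d) = a d / Gf d" using ld(3) Gf_pos[of d] by (simp add: field_simps)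
        moreover have "0 \<le> a d / ((1 - l d) * Gf d)" using an ld(3) Gf_pos[of d] by simp
        ultimately show ?thesis unfolding \<psi>_def \<psi>'_def using ld(3)
          by (simp add: ennreal_mult[symmetric])
      qed
      have "emeasure M ({\<omega>\<in>space M. l d < P t \<omega>} \<inter> {\<omega>\<in>space M. H1d \<omega> = d})
          = ennreal (prob {\<omega>\<in>space M. l d < P t \<omega>}) * ennreal (prob {\<omega>\<in>space M. H1d \<omega> = d})"
        using indP[OF Sr H1ev] by (simp add: emeasure_eq_measure ennreal_mult)
      moreover have "ennreal (1 - l d) * emeasure M {\<omega>\<in>space M. H1d \<omega> = d} \<le>
          ennreal (prob {\<omega>\<in>space M. l d < P t \<omega>}) * ennreal (prob {\<omega>\<in>space M. H1d \<omega> = d})"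
        using pS by (auto simp: emeasure_eq_measure intro!: mult_right_mono ennreal_leI)
      ultimately show "\<psi> d * emeasure M {\<omega>\<in>space M. H1d \<omega> = d}
          \<le> \<psi>' d * emeasure M ({\<omega>\<in>space M. l d < P t \<omega>} \<inter> {\<omega>\<in>space M. H1d \<omega> = d})"
        unfolding psi by (simp add: mult.assoc mult_left_mono)
    qed
    also have "\<dots> = (\<integral>\<^sup>+\<omega>. (if l (H1d \<omega>) < P t \<omega> then \<psi>' (H1d \<omega>) else 0) \<partial>M)"
      by (rule fin_integral2[OF fK HinK(3) H1evM, symmetric]) (use meas in measurable)
    also have "\<dots> = (\<integral>\<^sup>+x\<in>A. f3 x \<partial>M)"
    proof (rule nn_integral_cong)
      fix \<omega> assume w: "\<omega> \<in> space M"
      show "(if l (H1d \<omega>) < P t \<omega> then \<psi>' (H1d \<omega>) else 0) = f3 \<omega> * indicator A \<omega>"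
      proof (cases "lambda \<omega> < P t \<omega>")
        case True
        then have "Hd \<omega> = H1d \<omega>" by (rule same1)
        then show ?thesis using True alpha_eq[of \<omega>] lambda_eq[of \<omega>] G_eq[of \<omega>] indA[OF w]
          unfolding f3_def \<psi>'_def by simp
      next
        case False
        then show ?thesis using lambda_eq[of \<omega>] unfolding f3_def by simp
      qed
    qed
    finally show ?thesis .
  qed
  have le2: "AE x in M. nn_cond_exp M F f2 x \<le> nn_cond_exp M F f1 x"
    by (rule S.nn_cond_exp_le_int[OF f2M f1M I1])
  have le1: "AE x in M. nn_cond_exp M F f1 x \<le> nn_cond_exp M F f3 x"
    by (rule S.nn_cond_exp_le_int[OF f1M f3M I2])
  show ?thesis using le1 le2 unfolding f1_def f2_def f3_def by (rule AE_conjI)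
qed

end
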